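(* Let $p$ be an odd prime and $q=p^r$ with $r\ge1$. Let $k\in(\mathbb{Z}/q\mathbb{Z})^\times$ and let $\theta_k:(\mathbb{Z}/q\mathbb{Z})^\times\to(\mathbb{Z}/q\mathbb{Z})^\times$ be multiplication by $k$, $\theta_k(u)=ku$. Let $f:(\mathbb{Z}/q\mathbb{Z})^\times\to\mathbb{R}$ be a function that is monotonic on $[1,q]_\mathbb{Z}$. Then the following are equivalent: (i) $f\circ\theta_k=f$; (ii) $k=1$ or $f$ is constant.
   Context: $[a,b]_\mathbb{Z}$ denotes the set of integers in the closed interval $[a,b]$ not divisible by $p$; $[1,q]_\mathbb{Z}$ is used as the set of representatives of $(\mathbb{Z}/q\mathbb{Z})^\times$, and "$f$ monotonic on $[1,q]_\mathbb{Z}$" means that $i\mapsto f(i\bmod q)$ is monotonic on this set of integers ordered as usual. *)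

theory Defs
  imports Complex_Main "HOL-Computational_Algebra.Primes"
begin

text \<open>The integer interval [a,b] with multiples of p removed; [1,q]_Z serves as the
set of representatives of the unit group of Z/qZ.\<close>
definition int_interval_coprime :: "nat \<Rightarrow> nat \<Rightarrow> nat \<Rightarrow> nat set" where
  "int_interval_coprime p a b = {u. a \<le> u \<and> u \<le> b \<and> \<not> p dvd u}"

definition theta :: "nat \<Rightarrow> nat \<Rightarrow> nat \<Rightarrow> nat" where
  "theta q k u = (k * u) mod q"

end

theory Submission
  imports Defs
begin

lemma core:
  fixes p q k m :: nat
  assumes "prime p" "odd p" "2 \<le> k" "k < q" "1 \<le> m" "2*m < q"
    and cl: "\<forall>u. 1 \<le> u \<and> u \<le> m \<and> \<not> p dvd u \<longrightarrow> (k*u) mod q \<le> m"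
  shows False
proof -
  have p3: "p \<ge> 3"
  proof -
    have "p \<noteq> 2" using assms(2) by auto
    thus ?thesis using prime_ge_2_nat[OF assms(1)] by linarith
  qed
  have "\<not> p dvd 1" using prime_gt_1_nat[OF assms(1)] by simp
  hence "k mod q \<le> m" using cl[rule_format, of 1] assms(5) by simp
  hence km: "k \<le> m" using assms(4) by simp
  define d where "d = m div k"
  have d1: "k*d \<le> m" unfolding d_def by (metis div_times_less_eq_dividend mult.commute)
  have d2: "m < k*d + k" proof -
    have "m = k*d + m mod k" unfolding d_def by simp
    moreover have "m mod k < k" using assms(3) by simp
    ultimately show ?thesis by linarith
  qed
  show False
  proof (cases "p dvd (d+1)")
    case False
    have a: "k*(d+1) \<le> 2*m" using d1 km by simp
    have b: "m < k*(d+1)" using d2 by simp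
    have "2*(d+1) \<le> k*(d+1)" using assms(3) by (intro mult_right_mono) auto
    hence "2*(d+1) \<le> 2*m" using a by (rule order_trans)
    hence c: "d+1 \<le> m" by simp
    have "(k*(d+1)) mod q = k*(d+1)" using a assms(6) by simp
    thus False using cl[rule_format, of "d+1"] False b c by simp
  next
    case True
    hence "d+1 \<ge> p" by (simp add: dvd_imp_le)
    hence dd: "d \<ge> 2" using p3 by simp
    have "k*2 \<le> k*d" using dd by (intro mult_left_mono) auto
    hence k2: "2*k \<le> m" using d1 by linarith
    have nd: "\<not> p dvd (d+2)"
    proof
      assume "p dvd (d+2)"
      with True have "p dvd ((d+2) - (d+1))" using dvd_diff_nat by blast
      hence "p dvd 1" by simp
      thus False using assms(1) by simp
    qed
    have a: "k*(d+2) \<le> 2*m" using d1 k2 by (simp add: algebra_simps)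
    have b: "m < k*(d+2)" using d2 by (simp add: algebra_simps)
    have "2*(d+2) \<le> k*(d+2)" using assms(3) by (intro mult_right_mono) auto
    hence "2*(d+2) \<le> 2*m" using a by (rule order_trans)
    hence c: "d+2 \<le> m" by simp
    have "(k*(d+2)) mod q = k*(d+2)" using a assms(6) by simp
    thus False using cl[rule_format, of "d+2"] nd b c by simp
  qed
qed

lemma neg_mod:
  fixes a b q x :: nat
  assumes "a + b = c*q" "b mod q = x" "0 < x" "x < q"
  shows "a mod q = q - x"
proof -
  have "(a mod q + b mod q) mod q = (a + b) mod q" by (rule mod_add_eq)
  also have "\<dots> = 0" using assms(1) by simp
  finally have "(a mod q + x) mod q = 0" using assms(2) by simp
  hence "q dvd (a mod q + x)" by (simp add: mod_eq_0_iff_dvd)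
  then obtain e where e: "a mod q + x = q*e" by (elim dvdE)
  have "a mod q < q" using assms(4) by simp
  hence "q*e < q*2" using assms(4) e by linarith
  hence "e < 2" by (simp only: mult_less_cancel1)
  moreover have "e \<noteq> 0" using e assms(3) by (intro notI) simp
  ultimately have "e = 1" by linarith
  thus ?thesis using e by simp
qed

lemma mono_case:
  fixes p r q k :: nat and f :: "nat \<Rightarrow> real"
  assumes "prime p" and "odd p" and "r \<ge> 1" and "q = p ^ r"
    and kS: "k \<in> int_interval_coprime p 1 q" and k1: "k \<noteq> 1"
    and mono: "monotone_on (int_interval_coprime p 1 q) (\<le>) (\<le>) f"
    and inv: "\<forall>u \<in> int_interval_coprime p 1 q. f (theta q k u) = f u"
  shows "\<forall>u \<in> int_interval_coprime p 1 q. \<forall>v \<in> int_interval_coprime p 1 q. f u = f v"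
proof -
  define S where "S = int_interval_coprime p 1 q"
  have Sdef: "\<And>u. u \<in> S \<longleftrightarrow> 1 \<le> u \<and> u \<le> q \<and> \<not> p dvd u"
    unfolding S_def int_interval_coprime_def by simp
  have pq: "p dvd q" using assms(3,4) by (simp add: dvd_power)
  have p2: "p \<ge> 2" using prime_ge_2_nat[OF assms(1)] .
  have qp: "q \<ge> p" using assms(3,4) p2 by (simp add: dvd_imp_le pq)
  have ltq: "\<And>u. u \<in> S \<Longrightarrow> u < q"
  proof -
    fix u assume "u \<in> S"
    hence "u \<le> q" "u \<noteq> q" using Sdef pq by auto
    thus "u < q" by simp
  qed
  have one: "1 \<in> S" using Sdef p2 qp assms(1) by auto
  have qm1: "q - 1 \<in> S"
  proof -
    have "\<not> p dvd (q-1)"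
    proof
      assume "p dvd (q-1)"
      hence "p dvd (q - (q-1))" using pq dvd_diff_nat by blast
      hence "p dvd 1" using qp p2 by simp
      thus False using assms(1) by simp
    qed
    thus ?thesis using Sdef qp p2 by auto
  qed
  have negS: "\<And>u. u \<in> S \<Longrightarrow> q - u \<in> S"
  proof -
    fix u assume u: "u \<in> S"
    have "\<not> p dvd (q-u)"
    proof
      assume "p dvd (q-u)"
      hence "p dvd (q - (q-u))" using pq dvd_diff_nat by blast
      hence "p dvd u" using ltq[OF u] by simp
      thus False using u Sdef by simp
    qed
    thus "q - u \<in> S" using Sdef ltq[OF u] u by auto
  qed
  have kq: "k < q" using ltq kS S_def by simp
  have k2: "k \<ge> 2" using kS k1 unfolding int_interval_coprime_def by auto
  have thS: "\<And>u. u \<in> S \<Longrightarrow> theta q k u \<in> S \<and> theta q k u \<noteq> 0"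
  proof -
    fix u assume u: "u \<in> S"
    have nd: "\<not> p dvd theta q k u"
    proof
      assume "p dvd theta q k u"
      hence "p dvd k*u" unfolding theta_def using pq
        by (metis dvd_mod_iff)
      hence "p dvd k \<or> p dvd u" using assms(1) prime_dvd_mult_nat by blast
      thus False using u kS Sdef S_def by auto
    qed
    have "theta q k u < q" unfolding theta_def using kq by simp
    moreover have "theta q k u \<noteq> 0" using nd by (metis dvd_0_right)
    ultimately show "theta q k u \<in> S \<and> theta q k u \<noteq> 0" using Sdef nd by auto
  qed
  have thneg: "\<And>u. u \<in> S \<Longrightarrow> theta q k (q-u) = q - theta q k u"
  proof -
    fix u assume u: "u \<in> S"
    have "k*(q-u) + k*u = k*q" using ltq[OF u] by (simp add: diff_mult_distrib2)
    moreover have "0 < theta q k u" using thS[OF u] by simp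
    moreover have "theta q k u < q" unfolding theta_def using kq by simp
    ultimately show "theta q k (q-u) = q - theta q k u"
      using neg_mod[of "k*(q-u)" "k*u" k q "theta q k u"] unfolding theta_def by simp
  qed
  have mon: "\<And>u v. u \<in> S \<Longrightarrow> v \<in> S \<Longrightarrow> u \<le> v \<Longrightarrow> f u \<le> f v"
    using mono unfolding S_def monotone_on_def by blast
  have bounds: "\<And>u. u \<in> S \<Longrightarrow> f 1 \<le> f u \<and> f u \<le> f (q-1)"
    proof -
    fix u assume u: "u \<in> S"
    have "1 \<le> u" "u \<le> q - 1" using u Sdef ltq[OF u] by auto
    thus "f 1 \<le> f u \<and> f u \<le> f (q-1)" using mon one qm1 u by blast
  qed
  show ?thesis
  proof (rule ccontr)
    assume nc: "\<not> ?thesis"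
    have lt: "f 1 < f (q-1)"
    proof (rule ccontr)
      assume "\<not> f 1 < f (q-1)"
      hence "\<forall>u\<in>S. f u = f 1" using bounds by force
      thus False using nc S_def by simp
    qed
    define L where "L = {u\<in>S. f u = f 1}"
    have finL: "finite L" proof -
    have "L \<subseteq> {..q}" unfolding L_def using Sdef by auto
    thus ?thesis using finite_subset by blast
  qed
    have oneL: "1 \<in> L" using one L_def by simp
    define m where "m = Max L"
    have mL: "m \<in> L" using finL oneL m_def Max_in by blast
    have m1: "1 \<le> m" using finL oneL m_def by simp
    have char: "\<And>u. u \<in> S \<Longrightarrow> (f u = f 1 \<longleftrightarrow> u \<le> m)"
    proof -
      fix u assume u: "u \<in> S"
      show "f u = f 1 \<longleftrightarrow> u \<le> m"
      proof
        assume "f u = f 1" thus "u \<le> m" using u finL m_def L_def by simp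
      next
        assume "u \<le> m"
        note um = this
        have mS: "m \<in> S" and fm: "f m = f 1" using mL L_def by auto
        have "f u \<le> f m" using mon[OF u mS um] .
        thus "f u = f 1" using fm bounds[OF u] by linarith
      qed
    qed
    have mS: "m \<in> S" using mL L_def by simp
    have mq: "m < q - 1"
    proof -
      have "m < q" using ltq[OF mS] .
      moreover have "m \<noteq> q - 1" using mL L_def lt by auto
      ultimately show ?thesis by linarith
    qed
    have cl1: "\<forall>u. 1 \<le> u \<and> u \<le> m \<and> \<not> p dvd u \<longrightarrow> (k*u) mod q \<le> m"
    proof (intro allI impI)
      fix u assume h: "1 \<le> u \<and> u \<le> m \<and> \<not> p dvd u"
      hence u: "u \<in> S" unfolding Sdef using mq by linarith
      have t: "theta q k u \<in> S" using thS[OF u] by blast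
      have e1: "f (theta q k u) = f u" using inv u unfolding S_def by blast
      have e2: "f u = f 1" using char[OF u] h by blast
      have "f (theta q k u) = f 1" using e1 e2 by simp
      hence "theta q k u \<le> m" using char[OF t] by blast
      thus "(k*u) mod q \<le> m" unfolding theta_def .
    qed
    define m' where "m' = q - 1 - m"
    have cl2: "\<forall>u. 1 \<le> u \<and> u \<le> m' \<and> \<not> p dvd u \<longrightarrow> (k*u) mod q \<le> m'"
    proof (intro allI impI)
      fix u assume h: "1 \<le> u \<and> u \<le> m' \<and> \<not> p dvd u"
      hence u: "u \<in> S" unfolding Sdef m'_def by linarith
      have v: "q - u \<in> S" using negS[OF u] .
      have tv: "theta q k (q-u) \<in> S" using thS[OF v] by blast
      have "\<not> q - u \<le> m" using h ltq[OF u] unfolding m'_def by linarith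
      hence "f (q-u) \<noteq> f 1" using char[OF v] by blast
      moreover have "f (theta q k (q-u)) = f (q-u)" using inv v unfolding S_def by blast
      ultimately have "f (theta q k (q-u)) \<noteq> f 1" by simp
      hence "\<not> theta q k (q-u) \<le> m" using char[OF tv] by blast
      hence "\<not> q - theta q k u \<le> m" using thneg[OF u] by simp
      moreover have "theta q k u < q" unfolding theta_def using kq by simp
      ultimately have "theta q k u \<le> m'" unfolding m'_def by linarith
      thus "(k*u) mod q \<le> m'" unfolding theta_def .
    qed
    have m'1: "1 \<le> m'" using mq unfolding m'_def by linarith
    show False
    proof (cases "2*m < q")
      case True
      show False using core[OF assms(1,2) k2 kq m1 True cl1] .
    next
      case False
      hence "2*m' < q" using mq unfolding m'_def by linarith
      show False using core[OF assms(1,2) k2 kq m'1 \<open>2*m' < q\<close> cl2] .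
    qed
  qed
qed

theorem lemma4p2:
  fixes p r q k :: nat and f :: "nat \<Rightarrow> real"
  assumes "prime p" and "odd p" and "r \<ge> 1" and "q = p ^ r"
    and "k \<in> int_interval_coprime p 1 q"
    and "monotone_on (int_interval_coprime p 1 q) (\<le>) (\<le>) f
         \<or> monotone_on (int_interval_coprime p 1 q) (\<le>) (\<ge>) f"
  shows "(\<forall>u \<in> int_interval_coprime p 1 q. f (theta q k u) = f u)
     \<longleftrightarrow> (k = 1 \<or> (\<forall>u \<in> int_interval_coprime p 1 q. \<forall>v \<in> int_interval_coprime p 1 q. f u = f v))"
proof
  assume inv: "\<forall>u \<in> int_interval_coprime p 1 q. f (theta q k u) = f u"
  show "k = 1 \<or> (\<forall>u \<in> int_interval_coprime p 1 q. \<forall>v \<in> int_interval_coprime p 1 q. f u = f v)"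
  proof (cases "k = 1")
    case True
    thus ?thesis by (rule disjI1)
  next
    case False
    show ?thesis
    proof (cases "monotone_on (int_interval_coprime p 1 q) (\<le>) (\<le>) f")
      case True
      have "\<forall>u \<in> int_interval_coprime p 1 q. \<forall>v \<in> int_interval_coprime p 1 q. f u = f v"
        by (rule mono_case[of p r q k f, OF assms(1-5) False True inv])
      thus ?thesis by (rule disjI2)
    next
      case F2: False
      have anti: "monotone_on (int_interval_coprime p 1 q) (\<le>) (\<ge>) f"
        using assms(6)
      proof (rule disjE)
        assume "monotone_on (int_interval_coprime p 1 q) (\<le>) (\<le>) f"
        with F2 show ?thesis by (rule notE)
      qed
      have m2: "monotone_on (int_interval_coprime p 1 q) (\<le>) (\<le>) (\<lambda>x. - f x)"
      proof (rule monotone_onI)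
        fix x y assume xy: "x \<in> int_interval_coprime p 1 q" "y \<in> int_interval_coprime p 1 q" "x \<le> y"
        have "f y \<le> f x" using monotone_onD[OF anti xy] by simp
        thus "- f x \<le> - f y" by simp
      qed
      have i2: "\<forall>u \<in> int_interval_coprime p 1 q. - f (theta q k u) = - f u" using inv by simp
      have "\<forall>u \<in> int_interval_coprime p 1 q. \<forall>v \<in> int_interval_coprime p 1 q. - f u = - f v"
        by (rule mono_case[of p r q k "\<lambda>x. - f x", OF assms(1-5) False m2 i2])
      hence "\<forall>u \<in> int_interval_coprime p 1 q. \<forall>v \<in> int_interval_coprime p 1 q. f u = f v"
        by (simp only: neg_equal_iff_equal)
      thus ?thesis by (rule disjI2)
    qed
  qed
next
  assume h: "k = 1 \<or> (\<forall>u \<in> int_interval_coprime p 1 q. \<forall>v \<in> int_interval_coprime p 1 q. f u = f v)"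
  have pq: "p dvd q" using assms(3,4) by (simp add: dvd_power)
  have ltq: "\<And>u. u \<in> int_interval_coprime p 1 q \<Longrightarrow> u < q"
  proof -
    fix u assume "u \<in> int_interval_coprime p 1 q"
    hence "u \<le> q" "u \<noteq> q" using pq unfolding int_interval_coprime_def by auto
    thus "u < q" by simp
  qed
  have thS: "\<And>u. u \<in> int_interval_coprime p 1 q \<Longrightarrow> theta q k u \<in> int_interval_coprime p 1 q"
  proof -
    fix u assume u: "u \<in> int_interval_coprime p 1 q"
    have nd: "\<not> p dvd theta q k u"
    proof
      assume "p dvd theta q k u"
      hence "p dvd k*u" unfolding theta_def using pq by (simp add: dvd_mod_iff)
      hence "p dvd k \<or> p dvd u" using assms(1) prime_dvd_mult_nat by blast
      thus False using u assms(5) unfolding int_interval_coprime_def by auto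
    qed
    have "theta q k u < q" unfolding theta_def using ltq[OF u] by simp
    moreover have "theta q k u \<noteq> 0" using nd by (intro notI) simp
    ultimately show "theta q k u \<in> int_interval_coprime p 1 q"
      using nd unfolding int_interval_coprime_def by auto
  qed
  show "\<forall>u \<in> int_interval_coprime p 1 q. f (theta q k u) = f u"
  proof
    fix u assume u: "u \<in> int_interval_coprime p 1 q"
    show "f (theta q k u) = f u"
    proof (cases "k = 1")
      case True thus ?thesis using ltq[OF u] by (simp add: theta_def)
    next
      case False thus ?thesis using h thS[OF u] u by blast
    qed
  qed
qed

end
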